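(* Let $a$ be a positive integer and $n\in\mathbb{N}$ (with $0\in\mathbb{N}$). For $x>0$, $x\neq 1$, \[ \frac{d^n}{dx^n}\left(\log_x a\right)=\frac{d^n}{dx^n}\left(\frac{\ln a}{\ln x}\right)=(\log_x a)\,\frac{(-1)^n n!}{x^n}\sum_{\sum_i i y_{k,i}=n}\frac{\left(\sum_i y_{k,i}\right)!}{(\ln x)^{\sum_i y_{k,i}}}\prod_{i=1}^{n}\frac{1}{i^{y_{k,i}}\,y_{k,i}!}. \]
   Context: The sum runs over all partitions of $n$, each represented as a tuple $(y_{k,1},\ldots,y_{k,n})$ of non-negative integers with $\sum_{i=1}^n i\,y_{k,i}=n$; sums $\sum_i$ run over $i=1,\ldots,n$. For $n=0$ the only partition is the zero partition. *)

theory Defs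
  imports "HOL-Analysis.Analysis"
begin

text \<open>Partitions of n, encoded as multiplicity vectors y : nat \<Rightarrow> nat
  supported on {1..n} (y i = number of parts equal to i), with
  \<Sum>i=1..n. i * y i = n.\<close>
definition partitions_mult :: "nat \<Rightarrow> (nat \<Rightarrow> nat) set" where
  "partitions_mult n = {y. (\<forall>i. i \<notin> {1..n} \<longrightarrow> y i = 0) \<and> (\<Sum>i=1..n. i * y i) = n}"

end

theory Submission
  imports Defs "HOL-Combinatorics.Stirling"
begin


definition PP :: "nat \<Rightarrow> nat \<Rightarrow> (nat \<Rightarrow> nat) set" where
  "PP N m = {y. (\<forall>i. i \<notin> {1..N} \<longrightarrow> y i = 0) \<and> (\<Sum>i=1..N. i * y i) = m}"
definition Kf :: "nat \<Rightarrow> (nat \<Rightarrow> nat) \<Rightarrow> nat" where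
  "Kf N y = (\<Sum>i=1..N. y i)"
definition Wf :: "nat \<Rightarrow> (nat \<Rightarrow> nat) \<Rightarrow> real" where
  "Wf N y = (\<Prod>i=1..N. 1 / (real i ^ y i * fact (y i)))"
definition ZN :: "nat \<Rightarrow> nat \<Rightarrow> real \<Rightarrow> real" where
  "ZN N m u = (\<Sum>y\<in>PP N m. u ^ Kf N y * Wf N y)"

lemma PP_le: assumes "y \<in> PP N m" "i \<in> {1..N}" shows "i * y i \<le> m"
proof -
  have "i * y i \<le> (\<Sum>i=1..N. i * y i)"
    by (rule member_le_sum) (use assms in auto)
  thus ?thesis using assms by (simp add: PP_def)
qed

lemma PP_finite: "finite (PP N m)"
proof -
  have "PP N m \<subseteq> {f. \<forall>x. (x \<in> {1..N} \<longrightarrow> f x \<in> {0..m}) \<and> (x \<notin> {1..N} \<longrightarrow> f x = 0)}"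
  proof
    fix y assume y: "y \<in> PP N m"
    have "y x \<le> m" if "x \<in> {1..N}" for x
    proof -
      have "y x \<le> x * y x" using that by simp
      thus ?thesis using PP_le[OF y that] by linarith
    qed
    thus "y \<in> {f. \<forall>x. (x \<in> {1..N} \<longrightarrow> f x \<in> {0..m}) \<and> (x \<notin> {1..N} \<longrightarrow> f x = 0)}"
      using y by (auto simp: PP_def)
  qed
  moreover have "finite {f. \<forall>x. (x \<in> {1..N} \<longrightarrow> f x \<in> {0..m}) \<and> (x \<notin> {1..N} \<longrightarrow> (f::nat\<Rightarrow>nat) x = 0)}"
    by (rule finite_set_of_finite_funs) auto
  ultimately show ?thesis by (rule finite_subset)
qed

lemma supp_red:
  assumes "\<forall>i. i \<notin> {1..m} \<longrightarrow> y i = 0" "m \<le> N"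
  shows "Kf N y = Kf m y" "Wf N y = Wf m y" "(\<Sum>i=1..N. i * y i) = (\<Sum>i=1..m. i * y i)"
proof -
  have s: "{1..m} \<subseteq> {1..N}" using assms by auto
  show "Kf N y = Kf m y" unfolding Kf_def
    by (rule sum.mono_neutral_right) (use s assms in auto)
  show "Wf N y = Wf m y" unfolding Wf_def
    by (rule prod.mono_neutral_right) (use s assms in auto)
  show "(\<Sum>i=1..N. i * y i) = (\<Sum>i=1..m. i * y i)"
    by (rule sum.mono_neutral_right) (use s assms in auto)
qed

lemma PP_eq: assumes "m \<le> N" shows "PP N m = PP m m"
proof
  show "PP N m \<subseteq> PP m m"
  proof
    fix y assume y: "y \<in> PP N m"
    have sup: "\<forall>i. i \<notin> {1..m} \<longrightarrow> y i = 0"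
    proof (intro allI impI)
      fix i assume i: "i \<notin> {1..m}"
      show "y i = 0"
      proof (cases "i \<in> {1..N}")
        case True
        with PP_le[OF y True] i show ?thesis by (cases "y i") auto
      next
        case False then show ?thesis using y by (auto simp: PP_def)
      qed
    qed
    show "y \<in> PP m m" using supp_red(3)[OF sup assms] y sup by (auto simp: PP_def)
  qed
next
  show "PP m m \<subseteq> PP N m"
  proof
    fix y assume y: "y \<in> PP m m"
    hence sup: "\<forall>i. i \<notin> {1..m} \<longrightarrow> y i = 0" by (auto simp: PP_def)
    show "y \<in> PP N m" using supp_red(3)[OF sup assms] y sup assms by (auto simp: PP_def)
  qed
qed

lemma ZN_eq: assumes "m \<le> N" shows "ZN N m u = ZN m m u"
  unfolding ZN_def PP_eq[OF assms]
proof (rule sum.cong[OF refl])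
  fix y assume "y \<in> PP m m"
  hence sup: "\<forall>i. i \<notin> {1..m} \<longrightarrow> y i = 0" by (auto simp: PP_def)
  show "u ^ Kf N y * Wf N y = u ^ Kf m y * Wf m y" using supp_red[OF sup assms] by simp
qed


lemma upd_w:
  assumes "i \<in> {1..N}"
  shows "(\<Sum>j=1..N. j * (y(i:=Suc (y i))) j) = i + (\<Sum>j=1..N. j * y j)"
proof -
  have "(\<Sum>j=1..N. j * (y(i:=Suc (y i))) j) = i * Suc (y i) + (\<Sum>j\<in>{1..N}-{i}. j * (y(i:=Suc (y i))) j)"
    using assms by (subst sum.remove[of _ i]) auto
  also have "(\<Sum>j\<in>{1..N}-{i}. j * (y(i:=Suc (y i))) j) = (\<Sum>j\<in>{1..N}-{i}. j * y j)"
    by (rule sum.cong) auto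
  also have "(\<Sum>j=1..N. j * y j) = i * y i + (\<Sum>j\<in>{1..N}-{i}. j * y j)"
    using assms by (subst sum.remove[of _ i]) auto
  ultimately show ?thesis by simp
qed

lemma upd_K:
  assumes "i \<in> {1..N}"
  shows "Kf N (y(i:=Suc (y i))) = Suc (Kf N y)"
proof -
  have a: "Kf N (y(i:=Suc (y i))) = Suc (y i) + (\<Sum>j\<in>{1..N}-{i}. (y(i:=Suc (y i))) j)"
    unfolding Kf_def using assms by (subst sum.remove[of _ i]) auto
  have b: "(\<Sum>j\<in>{1..N}-{i}. (y(i:=Suc (y i))) j) = (\<Sum>j\<in>{1..N}-{i}. y j)"
    by (rule sum.cong) auto
  have c: "Kf N y = y i + (\<Sum>j\<in>{1..N}-{i}. y j)"
    unfolding Kf_def using assms by (subst sum.remove[of _ i]) auto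
  show ?thesis unfolding a b c by simp
qed

lemma upd_W:
  assumes "i \<in> {1..N}"
  shows "real (i * Suc (y i)) * Wf N (y(i:=Suc (y i))) = Wf N y"
proof -
  define R where "R = (\<Prod>j\<in>{1..N}-{i}. 1 / (real j ^ y j * fact (y j)))"
  have "Wf N (y(i:=Suc (y i))) = 1 / (real i ^ Suc (y i) * fact (Suc (y i))) * (\<Prod>j\<in>{1..N}-{i}. 1 / (real j ^ (y(i:=Suc (y i))) j * fact ((y(i:=Suc (y i))) j)))"
    unfolding Wf_def using assms by (subst prod.remove[of _ i]) auto
  also have "(\<Prod>j\<in>{1..N}-{i}. 1 / (real j ^ (y(i:=Suc (y i))) j * fact ((y(i:=Suc (y i))) j))) = R"
    unfolding R_def by (rule prod.cong) auto
  finally have 1: "Wf N (y(i:=Suc (y i))) = 1 / (real i ^ Suc (y i) * fact (Suc (y i))) * R" .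
  have 2: "Wf N y = 1 / (real i ^ y i * fact (y i)) * R"
    unfolding Wf_def R_def using assms by (subst prod.remove[of _ i]) auto
  have ipos: "real i > 0" using assms by auto
  show ?thesis unfolding 1 2 using ipos
    by (simp add: field_simps fact_Suc del: of_nat_Suc) (simp add: algebra_simps)
qed

lemma key_sum:
  assumes i: "i \<in> {1..N}" and im: "i \<le> m"
  shows "(\<Sum>y\<in>PP N m. real (i * y i) * (u ^ Kf N y * Wf N y)) = u * ZN N (m-i) u"
proof -
  define g where "g = (\<lambda>y::nat\<Rightarrow>nat. y(i:=Suc (y i)))"
  have 1: "(\<Sum>y\<in>PP N m. real (i * y i) * (u ^ Kf N y * Wf N y)) =
     (\<Sum>y\<in>{y\<in>PP N m. y i \<noteq> 0}. real (i * y i) * (u ^ Kf N y * Wf N y))"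
    by (rule sum.mono_neutral_right) (auto simp: PP_finite)
  have img: "{y\<in>PP N m. y i \<noteq> 0} = g ` PP N (m-i)"
  proof
    show "g ` PP N (m-i) \<subseteq> {y\<in>PP N m. y i \<noteq> 0}"
    proof
      fix z assume "z \<in> g ` PP N (m-i)"
      then obtain y where y: "y \<in> PP N (m-i)" and z: "z = g y" by auto
      have "(\<Sum>j=1..N. j * z j) = m" using upd_w[OF i, of y] y im unfolding z g_def by (simp add: PP_def)
      moreover have "\<forall>j. j \<notin> {1..N} \<longrightarrow> z j = 0" using y i unfolding z g_def PP_def by auto
      moreover have "z i \<noteq> 0" unfolding z g_def by simp
      ultimately show "z \<in> {y\<in>PP N m. y i \<noteq> 0}" by (simp add: PP_def)
    qed
  next
    show "{y\<in>PP N m. y i \<noteq> 0} \<subseteq> g ` PP N (m-i)"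
    proof
      fix z assume z: "z \<in> {y\<in>PP N m. y i \<noteq> 0}"
      define y where "y = z(i := z i - 1)"
      have gy: "g y = z" unfolding g_def y_def using z by auto
      have "(\<Sum>j=1..N. j * z j) = i + (\<Sum>j=1..N. j * y j)" using upd_w[OF i, of y] gy unfolding g_def by simp
      moreover have "(\<Sum>j=1..N. j * z j) = m" using z by (simp add: PP_def)
      ultimately have "(\<Sum>j=1..N. j * y j) = m - i" by linarith
      moreover have "\<forall>j. j \<notin> {1..N} \<longrightarrow> y j = 0" using z i unfolding y_def PP_def by auto
      ultimately have "y \<in> PP N (m-i)" by (simp add: PP_def)
      thus "z \<in> g ` PP N (m-i)" using gy by blast
    qed
  qed
  have inj: "inj_on g (PP N (m-i))"
  proof (rule inj_onI)
    fix y1 y2 assume "g y1 = g y2"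
    hence h: "\<And>j. (g y1) j = (g y2) j" by simp
    show "y1 = y2"
    proof
      fix j show "y1 j = y2 j" using h[of j] unfolding g_def by (cases "j = i") auto
    qed
  qed
  have "(\<Sum>y\<in>{y\<in>PP N m. y i \<noteq> 0}. real (i * y i) * (u ^ Kf N y * Wf N y)) =
     (\<Sum>y\<in>PP N (m-i). real (i * g y i) * (u ^ Kf N (g y) * Wf N (g y)))"
    unfolding img by (subst sum.reindex[OF inj]) simp
  also have "\<dots> = (\<Sum>y\<in>PP N (m-i). u * (u ^ Kf N y * Wf N y))"
  proof (rule sum.cong[OF refl])
    fix y
    have "real (i * g y i) * (u ^ Kf N (g y) * Wf N (g y)) = u * u ^ Kf N y * (real (i * Suc (y i)) * Wf N (g y))"
      unfolding g_def using upd_K[OF i, of y] by simp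
    also have "\<dots> = u * (u ^ Kf N y * Wf N y)" using upd_W[OF i, of y] unfolding g_def by simp
    finally show "real (i * g y i) * (u ^ Kf N (g y) * Wf N (g y)) = u * (u ^ Kf N y * Wf N y)" .
  qed
  also have "\<dots> = u * ZN N (m-i) u" unfolding ZN_def by (simp add: sum_distrib_left)
  finally show ?thesis using 1 by simp
qed

lemma ZN_rec: "real m * ZN m m u = u * (\<Sum>j<m. ZN j j u)"
proof -
  have "real m * ZN m m u = (\<Sum>y\<in>PP m m. real (\<Sum>i=1..m. i * y i) * (u ^ Kf m y * Wf m y))"
    unfolding ZN_def sum_distrib_left by (rule sum.cong) (auto simp: PP_def)
  also have "\<dots> = (\<Sum>y\<in>PP m m. \<Sum>i=1..m. real (i * y i) * (u ^ Kf m y * Wf m y))"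
    by (simp only: of_nat_sum sum_distrib_right)
  also have "\<dots> = (\<Sum>i=1..m. \<Sum>y\<in>PP m m. real (i * y i) * (u ^ Kf m y * Wf m y))"
    by (rule sum.swap)
  also have "\<dots> = (\<Sum>i=1..m. u * ZN (m-i) (m-i) u)"
  proof (rule sum.cong[OF refl])
    fix i assume i: "i \<in> {1..m}"
    hence "i \<le> m" by simp
    from key_sum[OF i this, of u] ZN_eq[of "m-i" m u]
    show "(\<Sum>y\<in>PP m m. real (i * y i) * (u ^ Kf m y * Wf m y)) = u * ZN (m-i) (m-i) u" by simp
  qed
  also have "\<dots> = u * (\<Sum>i=1..m. ZN (m-i) (m-i) u)" by (simp add: sum_distrib_left)
  also have "(\<Sum>i=1..m. ZN (m-i) (m-i) u) = (\<Sum>k<m. ZN (m - Suc k) (m - Suc k) u)"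
    by (simp add: sum.atLeast1_atMost_eq)
  also have "\<dots> = (\<Sum>j<m. ZN j j u)" by (rule sum.nat_diff_reindex)
  finally show ?thesis .
qed

lemma poch_sum: "u * (\<Sum>j<m. pochhammer u j / fact j) = real m * pochhammer u m / fact m"
proof (induction m)
  case 0 then show ?case by simp
next
  case (Suc m)
  have "u * (\<Sum>j<Suc m. pochhammer u j / fact j) = real m * pochhammer u m / fact m + u * pochhammer u m / fact m"
    using Suc by (simp add: distrib_left)
  also have "\<dots> = (real m + u) * pochhammer u m / fact m" by (simp add: field_simps)
  also have "\<dots> = real (Suc m) * pochhammer u (Suc m) / fact (Suc m)"
    by (simp add: pochhammer_Suc fact_Suc field_simps del: of_nat_Suc)
  finally show ?case .
qed

lemma ZN_poch: "ZN m m u = pochhammer u m / fact m"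
proof (induction m rule: less_induct)
  case (less m)
  show ?case
  proof (cases "m = 0")
    case True
    have "PP 0 0 = {\<lambda>_. 0}" by (auto simp: PP_def)
    then show ?thesis using True by (simp add: ZN_def Kf_def Wf_def)
  next
    case False
    have "real m * ZN m m u = u * (\<Sum>j<m. pochhammer u j / fact j)"
      using ZN_rec[of m u] less by simp
    also have "\<dots> = real m * (pochhammer u m / fact m)" by (simp add: poch_sum)
    finally have eq: "real m * ZN m m u = real m * (pochhammer u m / fact m)" .
    have nz: "real m \<noteq> 0" using False by simp
    show ?thesis using mult_left_cancel[OF nz] eq by blast
  qed
qed



lemma Kf_le: assumes "y \<in> PP m m" shows "Kf m y \<le> m"
proof -
  have "Kf m y \<le> (\<Sum>i=1..m. i * y i)" unfolding Kf_def by (rule sum_mono) auto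
  thus ?thesis using assms by (simp add: PP_def)
qed

lemma coeff_eq:
  assumes "k \<le> m"
  shows "(\<Sum>y\<in>{y\<in>PP m m. Kf m y = k}. Wf m y) = real (stirling m k) / fact m"
proof -
  define c where "c k = (\<Sum>y\<in>{y\<in>PP m m. Kf m y = k}. Wf m y)" for k
  have "(\<Sum>k\<le>m. c k * u ^ k) = (\<Sum>k\<le>m. real (stirling m k) / fact m * u ^ k)" for u
  proof -
    have "(\<Sum>k\<le>m. c k * u ^ k) = (\<Sum>k\<le>m. \<Sum>y\<in>{y\<in>PP m m. Kf m y = k}. u ^ Kf m y * Wf m y)"
      unfolding c_def sum_distrib_right
    proof (rule sum.cong[OF refl], rule sum.cong[OF refl])
      fix k y assume "y \<in> {y\<in>PP m m. Kf m y = k}"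
      then have "Kf m y = k" by simp
      then show "Wf m y * u ^ k = u ^ Kf m y * Wf m y" by simp
    qed
    also have "\<dots> = ZN m m u" unfolding ZN_def
      by (rule sum.group) (auto simp: PP_finite Kf_le)
    also have "\<dots> = pochhammer u m / fact m" by (rule ZN_poch)
    also have "\<dots> = (\<Sum>k\<le>m. real (stirling m k) / fact m * u ^ k)"
      unfolding stirling_pochhammer[symmetric, of u m] sum_divide_distrib by (rule sum.cong) auto
    finally show ?thesis .
  qed
  hence "\<forall>k\<le>m. c k = real (stirling m k) / fact m"
    using polyfun_eq_coeffs[where n=m and c=c and d="\<lambda>k. real (stirling m k) / fact m"] by blast
  thus ?thesis using assms unfolding c_def by blast
qed



lemma T_deriv:
  fixes t :: real
  assumes tp: "t > 0" and L: "ln t \<noteq> 0"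
  shows "((\<lambda>t. 1 / (t ^ n * ln t ^ (k+1))) has_real_derivative
      (- real n * (1 / (t ^ (n+1) * ln t ^ (k+1))) - real (k+1) * (1 / (t ^ (n+1) * ln t ^ (k+1+1))))) (at t)"
proof -
  have d1: "((\<lambda>t. t ^ n) has_real_derivative real n * t ^ (n - Suc 0)) (at t)" by (rule DERIV_pow)
  have d2: "((\<lambda>t. ln t ^ Suc k) has_real_derivative (1 + real k) * (inverse t * ln t ^ k)) (at t)"
    by (rule DERIV_power_Suc[OF DERIV_ln[OF tp]])
  have d3: "((\<lambda>t. t ^ n * ln t ^ Suc k) has_real_derivative
      real n * t ^ (n - Suc 0) * ln t ^ Suc k + (1 + real k) * (inverse t * ln t ^ k) * t ^ n) (at t)"
    by (rule DERIV_mult[OF d1 d2])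
  have nz: "t ^ n * ln t ^ Suc k \<noteq> 0" using tp L by simp
  have d4: "((\<lambda>t. 1 / (t ^ n * ln t ^ Suc k)) has_real_derivative
      (0 * (t ^ n * ln t ^ Suc k) - 1 * (real n * t ^ (n - Suc 0) * ln t ^ Suc k + (1 + real k) * (inverse t * ln t ^ k) * t ^ n))
       / ((t ^ n * ln t ^ Suc k) * (t ^ n * ln t ^ Suc k))) (at t)"
    by (rule DERIV_divide[OF DERIV_const d3 nz])
  have eq: "(0 * (t ^ n * ln t ^ Suc k) - 1 * (real n * t ^ (n - Suc 0) * ln t ^ Suc k + (1 + real k) * (inverse t * ln t ^ k) * t ^ n))
       / ((t ^ n * ln t ^ Suc k) * (t ^ n * ln t ^ Suc k)) =
      (- real n * (1 / (t ^ (n+1) * ln t ^ (k+1))) - real (k+1) * (1 / (t ^ (n+1) * ln t ^ (k+1+1))))"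
  proof (cases n)
    case 0
    then show ?thesis using tp L by (simp add: field_simps)
  next
    case (Suc m)
    then show ?thesis using tp L by (simp add: field_simps)
  qed
  show ?thesis using DERIV_cong[OF d4 eq] by simp
qed

lemma stir_rec:
  fixes D :: "nat \<Rightarrow> real"
  shows "(\<Sum>k\<le>Suc n. fact k * real (stirling (Suc n) k) * D k) =
     real n * (\<Sum>k\<le>n. fact k * real (stirling n k) * D k) +
     (\<Sum>k\<le>n. fact k * real (stirling n k) * real (k+1) * D (k+1))"
proof -
  define h where "h k = fact k * real (stirling n k) * D k" for k
  have "(\<Sum>k\<le>Suc n. fact k * real (stirling (Suc n) k) * D k) =
        (\<Sum>k\<le>n. fact (Suc k) * real (stirling (Suc n) (Suc k)) * D (Suc k))"
    by (subst sum.atMost_Suc_shift) simp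
  also have "\<dots> = real n * (\<Sum>k\<le>n. h (Suc k)) + (\<Sum>k\<le>n. fact k * real (stirling n k) * real (k+1) * D (k+1))"
    unfolding h_def sum_distrib_left sum.distrib[symmetric]
    by (rule sum.cong) (auto simp: fact_Suc algebra_simps)
  also have "(\<Sum>k\<le>n. h (Suc k)) = (\<Sum>k\<le>n. h k) - h 0"
  proof -
    have "(\<Sum>k\<le>Suc n. h k) = h 0 + (\<Sum>k\<le>n. h (Suc k))" by (rule sum.atMost_Suc_shift)
    moreover have "(\<Sum>k\<le>Suc n. h k) = (\<Sum>k\<le>n. h k)" by (simp add: h_def)
    ultimately show ?thesis by simp
  qed
  also have "real n * ((\<Sum>k\<le>n. h k) - h 0) = real n * (\<Sum>k\<le>n. h k)"
    by (cases n) (auto simp: h_def)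
  finally show ?thesis unfolding h_def .
qed

definition G :: "nat \<Rightarrow> nat \<Rightarrow> real \<Rightarrow> real" where
  "G a n t = ln (real a) * (-1) ^ n * (\<Sum>k\<le>n. fact k * real (stirling n k) * (1 / (t ^ n * ln t ^ (k+1))))"

lemma G_deriv:
  fixes t :: real
  assumes "t > 0" "ln t \<noteq> 0"
  shows "(G a n has_real_derivative G a (Suc n) t) (at t)"
proof -
  define D where "D k = 1 / (t ^ (n+1) * ln t ^ (k+1))" for k
  have "(G a n has_real_derivative ln (real a) * (-1) ^ n * (\<Sum>k\<le>n. fact k * real (stirling n k) *
     (- real n * D k - real (k+1) * D (k+1)))) (at t)"
    unfolding G_def D_def
    by (intro DERIV_cmult DERIV_sum T_deriv assms)
  also have "ln (real a) * (-1) ^ n * (\<Sum>k\<le>n. fact k * real (stirling n k) *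
     (- real n * D k - real (k+1) * D (k+1))) = 
     ln (real a) * (-1) ^ Suc n * (real n * (\<Sum>k\<le>n. fact k * real (stirling n k) * D k) +
     (\<Sum>k\<le>n. fact k * real (stirling n k) * real (k+1) * D (k+1)))"
  proof -
    have "(\<Sum>k\<le>n. fact k * real (stirling n k) * (- real n * D k - real (k+1) * D (k+1))) =
       (\<Sum>k\<le>n. - (real n * (fact k * real (stirling n k) * D k)) - fact k * real (stirling n k) * real (k+1) * D (k+1))"
      by (rule sum.cong) (simp_all add: algebra_simps)
    also have "\<dots> = - (real n * (\<Sum>k\<le>n. fact k * real (stirling n k) * D k) +
     (\<Sum>k\<le>n. fact k * real (stirling n k) * real (k+1) * D (k+1)))"
      by (simp add: sum_subtractf sum_negf sum_distrib_left)
    finally have e: "(\<Sum>k\<le>n. fact k * real (stirling n k) * (- real n * D k - real (k+1) * D (k+1))) = - (real n * (\<Sum>k\<le>n. fact k * real (stirling n k) * D k) +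
     (\<Sum>k\<le>n. fact k * real (stirling n k) * real (k+1) * D (k+1)))" .
    have gen: "\<And>c X Y. X = - Y \<Longrightarrow> c * (-1) ^ n * X = c * (-1) ^ Suc n * (Y::real)" by simp
    show ?thesis by (rule gen[OF e])
  qed
  also have "\<dots> = G a (Suc n) t"
  proof -
    have "G a (Suc n) t = ln (real a) * (-1) ^ Suc n * (\<Sum>k\<le>Suc n. fact k * real (stirling (Suc n) k) * D k)"
      unfolding G_def D_def by simp
    then show ?thesis unfolding stir_rec by simp
  qed
  finally show ?thesis .
qed


lemma part_sum:
  fixes L :: real
  shows "(\<Sum>y\<in>partitions_mult n.
        fact (\<Sum>i=1..n. y i) / L ^ (\<Sum>i=1..n. y i) *
        (\<Prod>i=1..n. 1 / (real i ^ y i * fact (y i)))) =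
     (\<Sum>k\<le>n. fact k / L ^ k * (real (stirling n k) / fact n))"
proof -
  have pm: "partitions_mult n = PP n n" unfolding partitions_mult_def PP_def by simp
  have "(\<Sum>y\<in>partitions_mult n.
        fact (\<Sum>i=1..n. y i) / L ^ (\<Sum>i=1..n. y i) *
        (\<Prod>i=1..n. 1 / (real i ^ y i * fact (y i)))) =
        (\<Sum>y\<in>PP n n. fact (Kf n y) / L ^ (Kf n y) * Wf n y)"
    unfolding pm Kf_def Wf_def ..
  also have "\<dots> = (\<Sum>k\<le>n. \<Sum>y\<in>{y\<in>PP n n. Kf n y = k}. fact (Kf n y) / L ^ (Kf n y) * Wf n y)"
    by (rule sum.group[symmetric]) (auto simp: PP_finite Kf_le)
  also have "\<dots> = (\<Sum>k\<le>n. fact k / L ^ k * (\<Sum>y\<in>{y\<in>PP n n. Kf n y = k}. Wf n y))"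
    unfolding sum_distrib_left
  proof (rule sum.cong[OF refl], rule sum.cong[OF refl])
    fix k y assume "y \<in> {y\<in>PP n n. Kf n y = k}"
    then have "Kf n y = k" by simp
    then show "fact (Kf n y) / L ^ (Kf n y) * Wf n y = fact k / L ^ k * Wf n y" by simp
  qed
  also have "\<dots> = (\<Sum>k\<le>n. fact k / L ^ k * (real (stirling n k) / fact n))"
    by (rule sum.cong[OF refl]) (simp add: coeff_eq)
  finally show ?thesis .
qed

theorem proposition4p4:
  fixes a n :: nat and x :: real
  assumes "a > 0" and "x > 0" and "x \<noteq> 1"
  shows "(deriv ^^ n) (\<lambda>t. log t (real a)) x =
     log x (real a) * ((-1) ^ n * fact n / x ^ n) *
     (\<Sum>y\<in>partitions_mult n.
        fact (\<Sum>i=1..n. y i) / (ln x) ^ (\<Sum>i=1..n. y i) *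
        (\<Prod>i=1..n. 1 / (real i ^ y i * fact (y i))))"
proof -
  define S where "S = {0::real<..} - {1}"
  have oS: "open S" unfolding S_def by (intro open_Diff open_greaterThan closed_singleton)
  have inS: "t \<in> S \<longleftrightarrow> t > 0 \<and> t \<noteq> 1" for t unfolding S_def by auto
  have lnz: "ln t \<noteq> 0" if "t \<in> S" for t using that inS by simp
  have main: "\<forall>t\<in>S. (deriv ^^ m) (\<lambda>t. log t (real a)) t = G a m t" for m
  proof (induction m)
    case 0
    show ?case by (auto simp: G_def log_def)
  next
    case (Suc m)
    show ?case
    proof
      fix t assume t: "t \<in> S"
      have d: "(G a m has_real_derivative G a (Suc m) t) (at t)"
        using G_deriv[of t a m] t inS lnz by auto
      have d2: "((deriv ^^ m) (\<lambda>t. log t (real a)) has_real_derivative G a (Suc m) t) (at t)"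
        by (rule has_field_derivative_transform_within_open[OF d oS t]) (use Suc in auto)
      show "(deriv ^^ Suc m) (\<lambda>t. log t (real a)) t = G a (Suc m) t"
        using DERIV_imp_deriv[OF d2] by simp
    qed
  qed
  have xS: "x \<in> S" using assms inS by auto
  have L: "ln x \<noteq> 0" using lnz[OF xS] .
  have "(deriv ^^ n) (\<lambda>t. log t (real a)) x = G a n x" using main xS by blast
  also have "\<dots> = log x (real a) * ((-1) ^ n * fact n / x ^ n) *
     (\<Sum>k\<le>n. fact k / (ln x) ^ k * (real (stirling n k) / fact n))"
    unfolding G_def sum_distrib_left
  proof (rule sum.cong[OF refl])
    fix k
    show "ln (real a) * (- 1) ^ n * (fact k * real (stirling n k) * (1 / (x ^ n * ln x ^ (k + 1)))) =
          log x (real a) * ((- 1) ^ n * fact n / x ^ n) * (fact k / ln x ^ k * (real (stirling n k) / fact n))"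
      using L assms by (simp add: log_def field_simps)
  qed
  also have "\<dots> = log x (real a) * ((-1) ^ n * fact n / x ^ n) *
     (\<Sum>y\<in>partitions_mult n.
        fact (\<Sum>i=1..n. y i) / (ln x) ^ (\<Sum>i=1..n. y i) *
        (\<Prod>i=1..n. 1 / (real i ^ y i * fact (y i))))"
    by (simp only: part_sum)
  finally show ?thesis .
qed

end
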